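(* Let $G=(V,E)$ be a DAG and $ij\in E$. If $A\subseteq V$ is identifying for the edge $ij$, i.e. $\lambda_{ij|A}(\phi_G(\Omega,\Lambda))=\lambda_{ij}$ for all parameters $(\Omega,\Lambda)$, then $i\in A\subseteq V\setminus\overline{\mathrm{de}}(j)$.
   Context: $G=(V,E)$ is a DAG, edges $i\to j$ written $ij$; $\mathrm{de}(j)$ descendants of $j$ (excluding $j$), $\overline{\mathrm{de}}(j)=\{j\}\cup\mathrm{de}(j)$. Parameters: $\Omega=\mathrm{diag}(\omega_i)$ with $\omega_i>0$, $\Lambda=(\lambda_{ij})$ with $\lambda_{ij}=0$ for $ij\notin E$. $\phi_G(\Omega,\Lambda)=(I-\Lambda)^{-T}\Omega(I-\Lambda)^{-1}$. $\Sigma_A$ principal submatrix; for $K\subseteq V$ and $i,j$, $\Sigma_{ij|K}$ the submatrix with rows $(i,K)$ and columns $(j,K)$ (if $j\in K$ it has a repeated column); $\lambda_{ij|A}(\Sigma)=|\Sigma_{ij|A\setminus\{i\}}|/|\Sigma_A|$. *)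

theory Defs
  imports "Jordan_Normal_Form.Gauss_Jordan_Elimination" "Jordan_Normal_Form.Determinant"
begin

definition is_dag :: "nat \<Rightarrow> (nat \<times> nat) set \<Rightarrow> bool" where
  "is_dag n E \<longleftrightarrow> E \<subseteq> {0..<n} \<times> {0..<n} \<and> acyclic E"

definition de :: "(nat \<times> nat) set \<Rightarrow> nat \<Rightarrow> nat set" where
  "de E j = {k. (j, k) \<in> E\<^sup>+}"

definition de_bar :: "(nat \<times> nat) set \<Rightarrow> nat \<Rightarrow> nat set" where
  "de_bar E j = insert j (de E j)"

text \<open>Parameters: Omega given by its diagonal, Lambda an n x n matrix supported on E.\<close>
definition is_param :: "nat \<Rightarrow> (nat \<times> nat) set \<Rightarrow> (nat \<Rightarrow> real) \<Rightarrow> real mat \<Rightarrow> bool" where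
  "is_param n E \<omega> \<Lambda> \<longleftrightarrow> (\<forall>i<n. \<omega> i > 0) \<and> \<Lambda> \<in> carrier_mat n n \<and>
     (\<forall>i<n. \<forall>j<n. (i, j) \<notin> E \<longrightarrow> \<Lambda> $$ (i, j) = 0)"

definition mat_inv :: "real mat \<Rightarrow> real mat" where
  "mat_inv A = the (mat_inverse A)"

definition phi :: "nat \<Rightarrow> (nat \<Rightarrow> real) \<Rightarrow> real mat \<Rightarrow> real mat" where
  "phi n \<omega> \<Lambda> = transpose_mat (mat_inv (1\<^sub>m n - \<Lambda>)) * mat n n (\<lambda>(i, j). if i = j then \<omega> i else 0)
                 * mat_inv (1\<^sub>m n - \<Lambda>)"

definition sub_mat :: "real mat \<Rightarrow> nat list \<Rightarrow> nat list \<Rightarrow> real mat" where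
  "sub_mat S rs cs = mat (length rs) (length cs) (\<lambda>(a, b). S $$ (rs ! a, cs ! b))"

definition princ_sub :: "real mat \<Rightarrow> nat set \<Rightarrow> real mat" where
  "princ_sub S A = sub_mat S (sorted_list_of_set A) (sorted_list_of_set A)"

definition cond_sub :: "real mat \<Rightarrow> nat \<Rightarrow> nat \<Rightarrow> nat set \<Rightarrow> real mat" where
  "cond_sub S i j K = sub_mat S (i # sorted_list_of_set K) (j # sorted_list_of_set K)"

definition lambda_cond :: "real mat \<Rightarrow> nat \<Rightarrow> nat \<Rightarrow> nat set \<Rightarrow> real" where
  "lambda_cond S i j A = det (cond_sub S i j (A - {i})) / det (princ_sub S A)"

end

theory Submission
  imports Defs
begin

lemma det_two:
  fixes M :: "real mat"
  assumes M: "M \<in> carrier_mat N N" and pq: "p < N" "q < N" "p \<noteq> q"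
  and off: "\<And>a b. a < N \<Longrightarrow> b < N \<Longrightarrow> \<not> (a \<in> {p,q} \<and> b \<in> {p,q}) \<Longrightarrow> M $$ (a,b) = (if a = b then 1 else 0)"
  shows "det M = M$$(p,p) * M$$(q,q) - M$$(p,q) * M$$(q,p)"
proof -
  let ?S = "{\<pi>. \<pi> permutes {0..<N}}"
  let ?f = "\<lambda>\<pi>. signof \<pi> * (\<Prod>a=0..<N. M $$ (a, \<pi> a))"
  let ?sw = "Transposition.transpose p q"
  let ?T = "{id, ?sw}"
  have det: "det M = sum ?f ?S" by (rule det_def'[OF M])
  have sub: "?T \<subseteq> ?S" using pq by (auto simp: permutes_id permutes_swap_id)
  have zero: "\<forall>\<pi> \<in> ?S - ?T. ?f \<pi> = 0"
  proof
    fix \<pi> assume \<pi>: "\<pi> \<in> ?S - ?T"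
    hence perm: "\<pi> permutes {0..<N}" and ne: "\<pi> \<noteq> id" "\<pi> \<noteq> ?sw" by auto
    show "?f \<pi> = 0"
    proof (cases "\<exists>a<N. a \<notin> {p,q} \<and> \<pi> a \<noteq> a")
      case True
      then obtain a where a: "a < N" "a \<notin> {p,q}" "\<pi> a \<noteq> a" by blast
      have "\<pi> a < N" using permutes_in_image[OF perm] a by auto
      hence "M $$ (a, \<pi> a) = 0" using off[of a "\<pi> a"] a by auto
      hence "(\<Prod>a=0..<N. M $$ (a, \<pi> a)) = 0" using a by (intro prod_zero) auto
      thus ?thesis by simp
    next
      case False
      have fx: "\<And>a. a \<notin> {p,q} \<Longrightarrow> \<pi> a = a"
      proof -
        fix a assume "a \<notin> {p,q}"
        thus "\<pi> a = a" using False permutes_not_in[OF perm, of a] by (cases "a < N") auto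
      qed
      have inj: "inj \<pi>" using perm permutes_inj by blast
      have pp: "\<pi> p \<in> {p,q}"
      proof (rule ccontr)
        assume "\<pi> p \<notin> {p,q}"
        hence "\<pi> (\<pi> p) = \<pi> p" using fx by blast
        hence "\<pi> p = p" using inj by (meson injD)
        thus False using \<open>\<pi> p \<notin> {p,q}\<close> by auto
      qed
      have qq: "\<pi> q \<in> {p,q}"
      proof (rule ccontr)
        assume "\<pi> q \<notin> {p,q}"
        hence "\<pi> (\<pi> q) = \<pi> q" using fx by blast
        hence "\<pi> q = q" using inj by (meson injD)
        thus False using \<open>\<pi> q \<notin> {p,q}\<close> by auto
      qed
      have pq': "\<pi> p \<noteq> \<pi> q" using inj pq(3) by (meson injD)
      show ?thesis
      proof (cases "\<pi> p = p")
        case True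
        hence "\<pi> q = q" using qq pq' by auto
        hence "\<pi> = id" using True fx by (intro ext) (metis id_apply insertE singletonD)
        thus ?thesis using ne by auto
      next
        case False
        hence "\<pi> p = q" "\<pi> q = p" using pp qq pq' by auto
        hence "\<pi> = ?sw" using fx by (intro ext) (auto simp: Transposition.transpose_def)
        thus ?thesis using ne by auto
      qed
    qed
  qed
  have "det M = sum ?f ?T"
    unfolding det using sum.mono_neutral_right[OF _ sub zero] finite_permutations[of "{0..<N}"] by auto
  also have "?sw \<noteq> id" using pq(3) by (metis id_apply Transposition.transpose_apply_first)
  hence "sum ?f ?T = ?f id + ?f ?sw" by simp
  also have "?f id = M$$(p,p) * M$$(q,q)"
  proof -
    have d1: "\<forall>a\<in>{0..<N} - {p,q}. M $$ (a, id a) = 1" using off by simp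
    have "(\<Prod>a=0..<N. M $$ (a, id a)) = (\<Prod>a\<in>{p,q}. M $$ (a, id a))"
      by (rule prod.mono_neutral_right[OF _ _ d1]) (use pq in auto)
    thus ?thesis using pq by simp
  qed
  also have "?f ?sw = - (M$$(p,q) * M$$(q,p))"
  proof -
    have d1: "\<forall>a\<in>{0..<N} - {p,q}. M $$ (a, ?sw a) = 1" using off by (simp add: Transposition.transpose_def)
    have "(\<Prod>a=0..<N. M $$ (a, ?sw a)) = (\<Prod>a\<in>{p,q}. M $$ (a, ?sw a))"
      by (rule prod.mono_neutral_right[OF _ _ d1]) (use pq in auto)
    moreover have "signof ?sw = (-1::real)" using pq(3) by (simp add: sign_swap_id)
    ultimately show ?thesis using pq by (simp add: Transposition.transpose_def)
  qed
  finally show ?thesis by simp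
qed

lemma sigma_entry:
  fixes X :: "real mat"
  assumes X: "X \<in> carrier_mat n n" and ab: "a < n" "b < n"
  shows "(transpose_mat X * mat n n (\<lambda>(i, j). if i = j then \<omega> i else 0) * X) $$ (a,b)
    = (\<Sum>c<n. X $$ (c,a) * \<omega> c * X $$ (c,b))"
proof -
  have e1: "(transpose_mat X * mat n n (\<lambda>(i, j). if i = j then \<omega> i else 0)) $$ (a,c) = X $$ (c,a) * \<omega> c"
    if c: "c < n" for c
  proof -
    have "(transpose_mat X * mat n n (\<lambda>(i, j). if i = j then \<omega> i else 0)) $$ (a,c)
       = (\<Sum>d\<in>{0..<n}. X $$ (d,a) * (if d = c then \<omega> d else 0))"
      using X ab c by (simp add: scalar_prod_def)
    also have "\<dots> = X $$ (c,a) * \<omega> c" using c by (simp add: if_distrib cong: if_cong)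
    finally show ?thesis .
  qed
  have "(transpose_mat X * mat n n (\<lambda>(i, j). if i = j then \<omega> i else 0) * X) $$ (a,b)
     = (\<Sum>c\<in>{0..<n}. (transpose_mat X * mat n n (\<lambda>(i, j). if i = j then \<omega> i else 0)) $$ (a,c) * X $$ (c,b))"
    using X ab by (simp add: scalar_prod_def)
  also have "\<dots> = (\<Sum>c<n. X $$ (c,a) * \<omega> c * X $$ (c,b))"
    using e1 by (auto simp: lessThan_atLeast0 intro!: sum.cong)
  finally show ?thesis .
qed

lemma det_one_idx:
  fixes M :: "real mat"
  assumes M: "M \<in> carrier_mat N N" and p: "p < N"
  and off: "\<And>a b. a < N \<Longrightarrow> b < N \<Longrightarrow> \<not> (a = p \<and> b = p) \<Longrightarrow> M $$ (a,b) = (if a = b then 1 else 0)"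
  shows "det M = M$$(p,p)"
proof -
  let ?S = "{\<pi>. \<pi> permutes {0..<N}}"
  let ?f = "\<lambda>\<pi>. signof \<pi> * (\<Prod>a=0..<N. M $$ (a, \<pi> a))"
  let ?T = "{id}"
  have det: "det M = sum ?f ?S" by (rule det_def'[OF M])
  have sub: "?T \<subseteq> ?S" by (auto simp: permutes_id)
  have zero: "\<forall>\<pi> \<in> ?S - ?T. ?f \<pi> = 0"
  proof
    fix \<pi> assume \<pi>: "\<pi> \<in> ?S - ?T"
    hence perm: "\<pi> permutes {0..<N}" and ne: "\<pi> \<noteq> id" by auto
    have inj: "inj \<pi>" using perm permutes_inj by blast
    obtain a0 where a0: "\<pi> a0 \<noteq> a0" using ne by (metis eq_id_iff)
    have "\<exists>a. a \<noteq> p \<and> \<pi> a \<noteq> a"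
    proof (cases "a0 = p")
      case True
      have "\<pi> (\<pi> p) \<noteq> \<pi> p" using a0 True inj by (metis injD)
      thus ?thesis using a0 True by metis
    next
      case False thus ?thesis using a0 by blast
    qed
    then obtain a where a: "a \<noteq> p" "\<pi> a \<noteq> a" by blast
    have aN: "a < N" using permutes_not_in[OF perm, of a] a by (cases "a < N") auto
    have "\<pi> a < N" using permutes_in_image[OF perm] aN by auto
    hence "M $$ (a, \<pi> a) = 0" using off[of a "\<pi> a"] a aN by auto
    hence "(\<Prod>a=0..<N. M $$ (a, \<pi> a)) = 0" using aN by (intro prod_zero) auto
    thus "?f \<pi> = 0" by simp
  qed
  have "det M = sum ?f ?T"
    unfolding det using sum.mono_neutral_right[OF _ sub zero] finite_permutations[of "{0..<N}"] by auto
  also have "\<dots> = (\<Prod>a=0..<N. M $$ (a, a))" by simp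
  also have "\<dots> = (\<Prod>a\<in>{p}. M $$ (a, a))"
  proof (rule prod.mono_neutral_right)
    show "\<forall>a\<in>{0..<N} - {p}. M $$ (a, a) = 1" using off by simp
  qed (use p in auto)
  finally show ?thesis by simp
qed

locale chain =
  fixes n :: nat and E :: "(nat \<times> nat) set" and u :: "nat \<Rightarrow> nat" and L :: nat
  assumes dag: "is_dag n E" and L_pos: "0 < L" and walk: "\<And>t. t < L \<Longrightarrow> (u t, u (Suc t)) \<in> E"
begin

lemma trc: "s < t \<Longrightarrow> t \<le> L \<Longrightarrow> (u s, u t) \<in> E\<^sup>+"
proof (induction t)
  case 0 thus ?case by simp
next
  case (Suc t)
  show ?case
  proof (cases "s = t")
    case True thus ?thesis using walk Suc by auto
  next
    case False
    hence "(u s, u t) \<in> E\<^sup>+" using Suc by auto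
    thus ?thesis using walk[of t] Suc by (meson Suc_le_lessD trancl.trancl_into_trancl)
  qed
qed

lemma inj: "s \<le> L \<Longrightarrow> t \<le> L \<Longrightarrow> u s = u t \<Longrightarrow> s = t"
proof (rule ccontr)
  assume a: "s \<le> L" "t \<le> L" "u s = u t" "s \<noteq> t"
  have ac: "acyclic E" using dag unfolding is_dag_def by auto
  show False
  proof (cases "s < t")
    case True thus False using trc[of s t] a ac unfolding acyclic_def by auto
  next
    case False hence "t < s" using a by auto
    thus False using trc[of t s] a ac unfolding acyclic_def by auto
  qed
qed

lemma lt_n: "t \<le> L \<Longrightarrow> u t < n"
proof (cases "t < L")
  case True thus ?thesis using walk[of t] dag unfolding is_dag_def by auto
next
  case False
  assume "t \<le> L"
  show ?thesis
  proof (cases L)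
    case 0 thus ?thesis using L_pos by simp
  next
    case (Suc l) thus ?thesis using walk[of l] dag False \<open>t \<le> L\<close> unfolding is_dag_def by auto
  qed
qed

definition Lam :: "real mat" where
  "Lam = mat n n (\<lambda>(a,b). if \<exists>t<L. a = u t \<and> b = u (Suc t) then 1 else 0)"
definition Bm :: "real mat" where
  "Bm = mat n n (\<lambda>(a,b). if a = b \<or> (\<exists>s t. s < t \<and> t \<le> L \<and> a = u s \<and> b = u t) then 1 else 0)"

lemma Lam_row: "s < L \<Longrightarrow> c < n \<Longrightarrow> Lam $$ (u s, c) = (if c = u (Suc s) then 1 else 0)"
proof -
  assume s: "s < L" and c: "c < n"
  have "u s < n" using lt_n s by auto
  moreover have "(\<exists>t<L. u s = u t \<and> c = u (Suc t)) \<longleftrightarrow> c = u (Suc s)"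
    using inj s by (metis less_imp_le_nat)
  ultimately show ?thesis using c unfolding Lam_def by simp
qed

lemma Lam_row0: "a < n \<Longrightarrow> c < n \<Longrightarrow> (\<forall>s<L. a \<noteq> u s) \<Longrightarrow> Lam $$ (a, c) = 0"
  unfolding Lam_def by auto

lemma B_col: "c < n \<Longrightarrow> s \<le> L \<Longrightarrow> Bm $$ (c, u s) = (if \<exists>r\<le>s. c = u r then 1 else 0)"
proof -
  assume c: "c < n" and s: "s \<le> L"
  have "u s < n" using lt_n s by auto
  moreover have "(c = u s \<or> (\<exists>r t. r < t \<and> t \<le> L \<and> c = u r \<and> u s = u t)) \<longleftrightarrow> (\<exists>r\<le>s. c = u r)"
  proof
    assume "c = u s \<or> (\<exists>r t. r < t \<and> t \<le> L \<and> c = u r \<and> u s = u t)"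
    thus "\<exists>r\<le>s. c = u r" using inj s by (metis less_imp_le_nat order_refl)
  next
    assume "\<exists>r\<le>s. c = u r"
    then obtain r where "r \<le> s" "c = u r" by auto
    show "c = u s \<or> (\<exists>r t. r < t \<and> t \<le> L \<and> c = u r \<and> u s = u t)"
    proof (cases "r = s")
      case True thus ?thesis using \<open>c = u r\<close> by simp
    next
      case False hence "r < s" using \<open>r \<le> s\<close> by simp
      thus ?thesis using s \<open>c = u r\<close> by blast
    qed
  qed
  ultimately show ?thesis using c unfolding Bm_def by simp
qed

lemma B_off: "c < n \<Longrightarrow> x < n \<Longrightarrow> (\<forall>t\<le>L. x \<noteq> u t) \<Longrightarrow> Bm $$ (c, x) = (if c = x then 1 else 0)"
  unfolding Bm_def by auto

lemma B_row_off: "a < n \<Longrightarrow> b < n \<Longrightarrow> (\<forall>s<L. a \<noteq> u s) \<Longrightarrow> Bm $$ (a, b) = (if a = b then 1 else 0)"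
proof -
  assume ab: "a < n" "b < n" and h: "\<forall>s<L. a \<noteq> u s"
  have "\<not>(\<exists>s t. s < t \<and> t \<le> L \<and> a = u s \<and> b = u t)" using h less_le_trans by blast
  thus ?thesis using ab unfolding Bm_def by auto
qed

lemma Bm_carrier: "Bm \<in> carrier_mat n n" unfolding Bm_def by simp
lemma Lam_carrier: "Lam \<in> carrier_mat n n" unfolding Lam_def by simp

lemma LB_entry: "a < n \<Longrightarrow> b < n \<Longrightarrow>
  ((1\<^sub>m n - Lam) * Bm) $$ (a,b) = Bm $$ (a,b) - (\<Sum>c\<in>{0..<n}. Lam $$ (a,c) * Bm $$ (c,b))"
proof -
  assume ab: "a < n" "b < n"
  have "((1\<^sub>m n - Lam) * Bm) $$ (a,b) = (\<Sum>c\<in>{0..<n}. ((if a = c then 1 else 0) - Lam $$ (a,c)) * Bm $$ (c,b))"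
    using ab Bm_carrier Lam_carrier by (simp add: scalar_prod_def)
  also have "\<dots> = (\<Sum>c\<in>{0..<n}. (if a = c then Bm $$ (c,b) else 0)) - (\<Sum>c\<in>{0..<n}. Lam $$ (a,c) * Bm $$ (c,b))"
    by (subst sum_subtractf[symmetric], rule sum.cong) (auto simp: algebra_simps)
  also have "(\<Sum>c\<in>{0..<n}. (if a = c then Bm $$ (c,b) else 0)) = Bm $$ (a,b)" using ab by simp
  finally show ?thesis .
qed

lemma LB: "(1\<^sub>m n - Lam) * Bm = 1\<^sub>m n"
proof (rule eq_matI)
  fix a b assume "a < dim_row (1\<^sub>m n)" "b < dim_col (1\<^sub>m n)"
  hence ab: "a < n" "b < n" by auto
  show "((1\<^sub>m n - Lam) * Bm) $$ (a,b) = 1\<^sub>m n $$ (a,b)"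
  proof (cases "\<exists>s<L. a = u s")
    case True
    then obtain s where s: "s < L" "a = u s" by auto
    have nx: "u (Suc s) < n" using lt_n s by auto
    have "(\<Sum>c\<in>{0..<n}. Lam $$ (a,c) * Bm $$ (c,b)) = (\<Sum>c\<in>{0..<n}. if c = u (Suc s) then Bm $$ (c,b) else 0)"
      using s Lam_row by (intro sum.cong) auto
    also have "\<dots> = Bm $$ (u (Suc s), b)" using nx by simp
    finally have eq: "((1\<^sub>m n - Lam) * Bm) $$ (a,b) = Bm $$ (a,b) - Bm $$ (u (Suc s), b)"
      using LB_entry ab by simp
    show ?thesis
    proof (cases "\<exists>t\<le>L. b = u t")
      case True
      then obtain t where t: "t \<le> L" "b = u t" by auto
      have "Bm $$ (a,b) = (if s \<le> t then 1 else 0)"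
        using B_col[of a t] ab t s inj by (auto, metis le_trans less_imp_le_nat)
      moreover have "Bm $$ (u (Suc s),b) = (if Suc s \<le> t then 1 else 0)"
        using B_col[of "u (Suc s)" t] nx t s inj by (auto, metis le_trans Suc_leI)
      moreover have "(a = b) = (s = t)" using s t inj by auto
      ultimately show ?thesis using eq ab by auto
    next
      case False
      hence n1: "b \<noteq> u (Suc s)" "b \<noteq> a" using s by auto
      have "Bm $$ (a,b) = 0" using B_off[of a b] ab n1 False by auto
      moreover have "Bm $$ (u (Suc s),b) = 0" using B_off[of "u (Suc s)" b] ab nx n1 False by auto
      ultimately show ?thesis using eq ab n1 by simp
    qed
  next
    case False
    have "(\<Sum>c\<in>{0..<n}. Lam $$ (a,c) * Bm $$ (c,b)) = 0"
      using Lam_row0 ab False by (intro sum.neutral) auto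
    thus ?thesis using LB_entry ab B_row_off[of a b] False by auto
  qed
next
  show "dim_row ((1\<^sub>m n - Lam) * Bm) = dim_row (1\<^sub>m n)" using Lam_carrier Bm_carrier by simp
next
  show "dim_col ((1\<^sub>m n - Lam) * Bm) = dim_col (1\<^sub>m n)" using Lam_carrier Bm_carrier by simp
qed

lemma mat_inv_eq: "mat_inv (1\<^sub>m n - Lam) = Bm"
proof -
  let ?A = "1\<^sub>m n - Lam"
  have A: "?A \<in> carrier_mat n n" using Lam_carrier by (metis minus_carrier_mat one_carrier_mat)
  have BA: "Bm * ?A = 1\<^sub>m n" using mat_mult_left_right_inverse[OF A Bm_carrier LB] .
  have "det ?A \<noteq> 0" using det_mult[OF A Bm_carrier] LB by auto
  hence U: "\<And>b. ?A \<in> Units (ring_mat TYPE(real) n b)" by (rule det_non_zero_imp_unit[OF A])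
  obtain C where C: "mat_inverse ?A = Some C"
  proof (cases "mat_inverse ?A")
    case None thus ?thesis using mat_inverse(1)[OF A None, where b="()"] U[of "()"] by blast
  next
    case (Some C) thus ?thesis using that by blast
  qed
  from mat_inverse(2)[OF A C] have C1: "C * ?A = 1\<^sub>m n" and Cc: "C \<in> carrier_mat n n" by auto
  have "C = C * (?A * Bm)" using LB Cc by simp
  also have "\<dots> = (C * ?A) * Bm" using Cc A Bm_carrier by (simp add: assoc_mult_mat)
  also have "\<dots> = Bm" using C1 Bm_carrier by simp
  finally show ?thesis using C unfolding mat_inv_def by simp
qed

definition om :: "nat \<Rightarrow> real" where "om = (\<lambda>a. if a = u 0 then 2 else 1)"
definition Sig where "Sig = phi n om Lam"

lemma Sig_sum: "a < n \<Longrightarrow> b < n \<Longrightarrow> Sig $$ (a,b) = (\<Sum>c<n. Bm $$ (c,a) * om c * Bm $$ (c,b))"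
  unfolding Sig_def phi_def mat_inv_eq using sigma_entry[OF Bm_carrier] by simp

lemma sum_two: "(\<Sum>r\<in>{0..m}. (if r = 0 then 2 else 1::real)) = real m + 2"
  by (induction m) auto

lemma Sig_chain: "s \<le> L \<Longrightarrow> t \<le> L \<Longrightarrow> Sig $$ (u s, u t) = real (min s t) + 2"
proof -
  assume st: "s \<le> L" "t \<le> L"
  let ?m = "min s t"
  have n: "u s < n" "u t < n" using st lt_n by auto
  have eqc: "(\<exists>r\<le>s. c = u r) \<and> (\<exists>r\<le>t. c = u r) \<longleftrightarrow> c \<in> u ` {0..?m}" for c
  proof
    assume "(\<exists>r\<le>s. c = u r) \<and> (\<exists>r\<le>t. c = u r)"
    then obtain r1 r2 where r: "r1 \<le> s" "c = u r1" "r2 \<le> t" "c = u r2" by auto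
    hence "r1 = r2" using inj st by (metis le_trans)
    thus "c \<in> u ` {0..?m}" using r by auto
  next
    assume "c \<in> u ` {0..?m}" thus "(\<exists>r\<le>s. c = u r) \<and> (\<exists>r\<le>t. c = u r)" by auto
  qed
  have "Sig $$ (u s, u t) = (\<Sum>c<n. if c \<in> u ` {0..?m} then om c else 0)"
    unfolding Sig_sum[OF n] by (rule sum.cong) (auto simp: B_col st eqc[symmetric])
  also have "\<dots> = sum om ({..<n} \<inter> u ` {0..?m})" by (rule sum.inter_restrict[symmetric]) simp
  also have "{..<n} \<inter> u ` {0..?m} = u ` {0..?m}" using lt_n st by auto
  also have "sum om (u ` {0..?m}) = (\<Sum>r\<in>{0..?m}. om (u r))"
    by (rule sum.reindex[unfolded comp_def]) (use st inj in \<open>auto intro!: inj_onI\<close>)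
  also have "\<dots> = (\<Sum>r\<in>{0..?m}. (if r = 0 then 2 else 1::real))"
    by (rule sum.cong) (use st inj[of _ 0] in \<open>auto simp: om_def\<close>)
  finally show ?thesis using sum_two by simp
qed

lemma Sig_off: "a < n \<Longrightarrow> b < n \<Longrightarrow> (\<forall>t\<le>L. a \<noteq> u t) \<or> (\<forall>t\<le>L. b \<noteq> u t) \<Longrightarrow>
   Sig $$ (a,b) = (if a = b then 1 else 0)"
proof -
  assume ab: "a < n" "b < n" and h: "(\<forall>t\<le>L. a \<noteq> u t) \<or> (\<forall>t\<le>L. b \<noteq> u t)"
  show ?thesis
  proof (cases "\<forall>t\<le>L. a \<noteq> u t")
    case True
    have "Sig $$ (a,b) = (\<Sum>c<n. if c = a then om a * Bm $$ (a,b) else 0)"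
      unfolding Sig_sum[OF ab] by (rule sum.cong) (auto simp: B_off ab True)
    also have "\<dots> = om a * Bm $$ (a,b)" using ab by simp
    also have "om a = 1" using True unfolding om_def by auto
    also have "Bm $$ (a,b) = (if a = b then 1 else 0)" using B_row_off[OF ab] True by auto
    finally show ?thesis by simp
  next
    case False
    hence b: "\<forall>t\<le>L. b \<noteq> u t" using h by auto
    have "Sig $$ (a,b) = (\<Sum>c<n. if c = b then Bm $$ (b,a) * om b else 0)"
      unfolding Sig_sum[OF ab] by (rule sum.cong) (auto simp: B_off ab b)
    also have "\<dots> = Bm $$ (b,a) * om b" using ab by simp
    also have "om b = 1" using b unfolding om_def by auto
    also have "Bm $$ (b,a) = (if a = b then 1 else 0)" using B_row_off[of b a] ab b by auto
    finally show ?thesis by simp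
  qed
qed

lemma param: "is_param n E om Lam"
  unfolding is_param_def
proof (intro conjI allI impI)
  show "\<And>i. i < n \<Longrightarrow> 0 < om i" unfolding om_def by auto
  show "Lam \<in> carrier_mat n n" by (rule Lam_carrier)
  show "\<And>i j. i < n \<Longrightarrow> j < n \<Longrightarrow> (i, j) \<notin> E \<Longrightarrow> Lam $$ (i, j) = 0"
    unfolding Lam_def using walk by auto
qed

lemma Lam01: "Lam $$ (u 0, u 1) = 1"
  using Lam_row[of 0 "u 1"] L_pos lt_n[of 1] by simp

end

lemma sub_mat_idx: "a < length rs \<Longrightarrow> b < length cs \<Longrightarrow> sub_mat S rs cs $$ (a,b) = S $$ (rs ! a, cs ! b)"
  unfolding sub_mat_def by simp

lemma sub_mat_carrier: "sub_mat S rs cs \<in> carrier_mat (length rs) (length cs)"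
  unfolding sub_mat_def by simp

theorem mainTheorem2:
  fixes n :: nat and E :: "(nat \<times> nat) set" and i j :: nat and A :: "nat set"
  assumes "is_dag n E"
    and "(i, j) \<in> E"
    and "A \<subseteq> {0..<n}"
    and "\<forall>\<omega> \<Lambda>. is_param n E \<omega> \<Lambda> \<longrightarrow> lambda_cond (phi n \<omega> \<Lambda>) i j A = \<Lambda> $$ (i, j)"
  shows "i \<in> A \<and> A \<subseteq> {0..<n} - de_bar E j"
proof -
  note dag = assms(1) and ij = assms(2) and An = assms(3) and H = assms(4)
  have fin: "finite A" using An finite_subset by blast
  have ijn: "i < n" "j < n" using dag ij unfolding is_dag_def by auto
  have inej: "i \<noteq> j" using dag ij unfolding is_dag_def acyclic_def by auto
  define u1 where "u1 = (\<lambda>t::nat. if t = 0 then i else j)"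
  interpret C1: chain n E u1 1
    by unfold_locales (use dag ij in \<open>auto simp: u1_def\<close>)
  have u1: "u1 0 = i" "u1 1 = j" by (auto simp: u1_def)
  have HC1: "lambda_cond C1.Sig i j A = 1"
    using H C1.param C1.Lam01 u1 unfolding C1.Sig_def by auto
  have jA: "j \<notin> A"
  proof
    assume jA: "j \<in> A"
    define ys where "ys = sorted_list_of_set (A - {i})"
    have "j \<in> set ys" using jA inej fin unfolding ys_def by auto
    then obtain q where q: "q < length ys" "ys ! q = j" by (metis in_set_conv_nth)
    define M where "M = sub_mat C1.Sig (i # ys) (j # ys)"
    have Mc: "M \<in> carrier_mat (Suc (length ys)) (Suc (length ys))"
      unfolding M_def using sub_mat_carrier[of C1.Sig "i # ys" "j # ys"] by simp
    have "col M 0 = col M (Suc q)"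
    proof (rule eq_vecI)
      fix r assume "r < dim_vec (col M (Suc q))"
      hence r: "r < Suc (length ys)" using Mc by simp
      show "col M 0 $ r = col M (Suc q) $ r"
        using Mc r q unfolding M_def by (simp add: sub_mat_idx)
    qed (use Mc in simp)
    hence "det M = 0" using det_identical_columns[OF Mc, of 0 "Suc q"] q by auto
    hence "lambda_cond C1.Sig i j A = 0"
      unfolding lambda_cond_def cond_sub_def M_def ys_def by simp
    thus False using HC1 by simp
  qed
  have iA: "i \<in> A"
  proof (rule ccontr)
    assume iA: "i \<notin> A"
    define xs where "xs = sorted_list_of_set A"
    have xs: "distinct xs" "set xs = A" using fin unfolding xs_def by auto
    have offc: "\<forall>t\<le>1. x \<noteq> u1 t" if "x \<in> A" for x
      using that iA jA by (auto simp: u1_def)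
    have xsn: "xs ! a \<in> A" if "a < length xs" for a using xs that by auto
    have xsn': "xs ! a < n" if "a < length xs" for a using xsn[OF that] An by auto
    have P: "princ_sub C1.Sig A = 1\<^sub>m (length xs)"
    proof (rule eq_matI)
      fix a b assume "a < dim_row (1\<^sub>m (length xs))" "b < dim_col (1\<^sub>m (length xs))"
      hence ab: "a < length xs" "b < length xs" by auto
      have "princ_sub C1.Sig A $$ (a,b) = C1.Sig $$ (xs ! a, xs ! b)"
        unfolding princ_sub_def xs_def[symmetric] using ab by (simp add: sub_mat_idx)
      also have "\<dots> = (if xs ! a = xs ! b then 1 else 0)"
        using C1.Sig_off[OF xsn'[OF ab(1)] xsn'[OF ab(2)]] xsn[OF ab(1)] offc by auto
      also have "\<dots> = (if a = b then 1 else 0)" using xs ab nth_eq_iff_index_eq by metis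
      finally show "princ_sub C1.Sig A $$ (a,b) = 1\<^sub>m (length xs) $$ (a,b)" using ab by simp
    qed (auto simp: princ_sub_def sub_mat_def xs_def)
    define M where "M = cond_sub C1.Sig i j A"
    have Mc: "M \<in> carrier_mat (Suc (length xs)) (Suc (length xs))"
      unfolding M_def cond_sub_def xs_def[symmetric] using sub_mat_carrier[of C1.Sig "i # xs" "j # xs"] by simp
    have "det M = M $$ (0,0)"
    proof (rule det_one_idx[OF Mc])
      fix a b assume ab: "a < Suc (length xs)" "b < Suc (length xs)" "\<not> (a = 0 \<and> b = 0)"
      show "M $$ (a,b) = (if a = b then 1 else 0)"
      proof (cases a)
        case 0
        then obtain b' where b: "b = Suc b'" using ab by (cases b) auto
        have "M $$ (a,b) = C1.Sig $$ (i, xs ! b')"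
          unfolding M_def cond_sub_def xs_def[symmetric] using ab 0 b by (simp add: sub_mat_idx)
        also have "\<dots> = 0" using C1.Sig_off[of i "xs ! b'"] xsn[of b'] ab b offc An ijn iA by auto
        finally show ?thesis using 0 b by simp
      next
        case (Suc a')
        show ?thesis
        proof (cases b)
          case 0
          have "M $$ (a,b) = C1.Sig $$ (xs ! a', j)"
            unfolding M_def cond_sub_def xs_def[symmetric] using ab 0 Suc by (simp add: sub_mat_idx)
          also have "\<dots> = 0" using C1.Sig_off[of "xs ! a'" j] xsn[of a'] ab Suc offc An ijn jA by auto
          finally show ?thesis using 0 Suc by simp
        next
          case (Suc b')
          have "M $$ (a,b) = C1.Sig $$ (xs ! a', xs ! b')"
            unfolding M_def cond_sub_def xs_def[symmetric] using ab Suc \<open>a = Suc a'\<close> by (simp add: sub_mat_idx)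
          also have "\<dots> = (if xs ! a' = xs ! b' then 1 else 0)"
          proof -
            have l: "a' < length xs" "b' < length xs" using ab Suc \<open>a = Suc a'\<close> by auto
            show ?thesis using C1.Sig_off[OF xsn'[OF l(1)] xsn'[OF l(2)]] xsn[OF l(1)] offc by auto
          qed
          also have "\<dots> = (if a' = b' then 1 else 0)" using xs ab Suc \<open>a = Suc a'\<close> nth_eq_iff_index_eq
            by (metis Suc_less_eq)
          finally show ?thesis using Suc \<open>a = Suc a'\<close> by simp
        qed
      qed
    qed simp
    also have "M $$ (0,0) = C1.Sig $$ (i, j)"
      unfolding M_def cond_sub_def by (simp add: sub_mat_idx)
    also have "\<dots> = 2" using C1.Sig_chain[of 0 1] u1 by simp
    finally have "lambda_cond C1.Sig i j A = 2"
      unfolding lambda_cond_def P M_def using iA by simp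
    thus False using HC1 by simp
  qed
  have noDesc: "(j, k) \<notin> E\<^sup>+" if kA: "k \<in> A" for k
  proof
    assume jk: "(j, k) \<in> E\<^sup>+"
    define P where "P m \<longleftrightarrow> 0 < m \<and> (\<exists>f. f 0 = j \<and> f m \<in> A \<and> (\<forall>t<m. (f t, f (Suc t)) \<in> E))" for m
    have "\<exists>m. P m"
    proof -
      obtain m where m: "0 < m" "(j, k) \<in> E ^^ m" using jk trancl_power by blast
      then obtain f where "f 0 = j" "f m = k" "\<forall>t<m. (f t, f (Suc t)) \<in> E"
        using relpow_fun_conv by metis
      thus ?thesis using m kA unfolding P_def by metis
    qed
    then obtain m0 where Pm0: "P m0" and mn: "\<And>m. m < m0 \<Longrightarrow> \<not> P m"
      using exists_least_iff[of P] by blast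
    then obtain f where f: "f 0 = j" "f m0 \<in> A" "\<And>t. t < m0 \<Longrightarrow> (f t, f (Suc t)) \<in> E" and m0: "0 < m0"
      unfolding P_def by blast
    have notA: "f t \<notin> A" if t: "t < m0" for t
    proof
      assume "f t \<in> A"
      hence "P t \<or> t = 0" unfolding P_def using f t by (metis less_trans neq0_conv)
      thus False using mn t jA f \<open>f t \<in> A\<close> by auto
    qed
    define u where "u = (\<lambda>t. if t = 0 then i else f (t - 1))"
    define L where "L = Suc m0"
    interpret C: chain n E u L
    proof
      show "is_dag n E" by (rule dag)
      show "0 < L" unfolding L_def by simp
      fix t assume t: "t < L"
      show "(u t, u (Suc t)) \<in> E"
      proof (cases t)
        case 0 thus ?thesis using ij f unfolding u_def by simp
      next
        case (Suc t') thus ?thesis using f(3)[of t'] t unfolding u_def L_def by simp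
      qed
    qed
    define k' where "k' = u L"
    have u0: "u 0 = i" and u1': "u 1 = j" and k'A: "k' \<in> A"
      using f unfolding u_def k'_def L_def by auto
    have onA: "t = 0 \<or> t = L" if "t \<le> L" "u t \<in> A" for t
    proof (cases t)
      case (Suc t')
      show ?thesis
      proof (rule ccontr)
        assume "\<not> (t = 0 \<or> t = L)"
        hence "t' < m0" using that Suc unfolding L_def by auto
        thus False using notA[of t'] that Suc unfolding u_def by simp
      qed
    qed simp
    have ik: "i \<noteq> k'" using C.inj[of 0 L] u0 unfolding k'_def L_def by auto
    have offc: "\<forall>t\<le>L. x \<noteq> u t" if "x \<in> A" "x \<noteq> i" "x \<noteq> k'" for x
      using onA that u0 unfolding k'_def by blast
    have Sii: "C.Sig $$ (i,i) = 2" using C.Sig_chain[of 0 0] u0 by simp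
    have Skk: "C.Sig $$ (k',k') = real L + 2" using C.Sig_chain[of L L] unfolding k'_def by simp
    have Sik: "C.Sig $$ (i,k') = 2" using C.Sig_chain[of 0 L] u0 unfolding k'_def by simp
    have Ski: "C.Sig $$ (k',i) = 2" using C.Sig_chain[of L 0] u0 unfolding k'_def by simp
    have Sij: "C.Sig $$ (i,j) = 2" using C.Sig_chain[of 0 1] u0 u1' C.L_pos by simp
    have Skj: "C.Sig $$ (k',j) = 3" using C.Sig_chain[of L 1] u1' C.L_pos unfolding k'_def by simp
    have HC: "lambda_cond C.Sig i j A = 1"
      using H C.param C.Lam01 u0 u1' unfolding C.Sig_def by auto
    define xs where "xs = sorted_list_of_set A"
    have xs: "distinct xs" "set xs = A" using fin unfolding xs_def by auto
    have xsn: "xs ! a \<in> A" if "a < length xs" for a using xs that by auto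
    have xsn': "xs ! a < n" if "a < length xs" for a using xsn[OF that] An by auto
    obtain p where p: "p < length xs" "xs ! p = i" using iA xs by (metis in_set_conv_nth)
    obtain q where q: "q < length xs" "xs ! q = k'" using k'A xs by (metis in_set_conv_nth)
    have pq: "p \<noteq> q" using p q ik by auto
    have den: "det (princ_sub C.Sig A) = 2 * (real L + 2) - 4"
    proof -
      have Mc: "princ_sub C.Sig A \<in> carrier_mat (length xs) (length xs)"
        unfolding princ_sub_def xs_def[symmetric] by (rule sub_mat_carrier)
      have ent: "princ_sub C.Sig A $$ (a,b) = C.Sig $$ (xs ! a, xs ! b)" if "a < length xs" "b < length xs" for a b
        unfolding princ_sub_def xs_def[symmetric] using that by (simp add: sub_mat_idx)
      have "det (princ_sub C.Sig A) = princ_sub C.Sig A $$ (p,p) * princ_sub C.Sig A $$ (q,q)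
         - princ_sub C.Sig A $$ (p,q) * princ_sub C.Sig A $$ (q,p)"
      proof (rule det_two[OF Mc p(1) q(1) pq])
        fix a b assume ab: "a < length xs" "b < length xs" "\<not> (a \<in> {p,q} \<and> b \<in> {p,q})"
        have "xs ! a \<notin> {i,k'} \<or> xs ! b \<notin> {i,k'}"
          using ab p q xs(1) nth_eq_iff_index_eq by (metis insert_iff singletonD)
        hence "(\<forall>t\<le>L. xs ! a \<noteq> u t) \<or> (\<forall>t\<le>L. xs ! b \<noteq> u t)"
          using offc xsn ab by auto
        hence "C.Sig $$ (xs ! a, xs ! b) = (if xs ! a = xs ! b then 1 else 0)"
          using C.Sig_off[OF xsn'[OF ab(1)] xsn'[OF ab(2)]] by auto
        also have "\<dots> = (if a = b then 1 else 0)" using xs ab nth_eq_iff_index_eq by metis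
        finally show "princ_sub C.Sig A $$ (a,b) = (if a = b then 1 else 0)" using ent ab by simp
      qed
      thus ?thesis using ent p q Sii Skk Sik Ski by simp
    qed
    define ys where "ys = sorted_list_of_set (A - {i})"
    have ys: "distinct ys" "set ys = A - {i}" using fin unfolding ys_def by auto
    have ysn: "ys ! a \<in> A" "ys ! a \<noteq> i" if "a < length ys" for a using ys that nth_mem by blast+
    have ysn': "ys ! a < n" if "a < length ys" for a using ysn[OF that] An by auto
    obtain q' where q': "q' < length ys" "ys ! q' = k'" using k'A ik ys by (metis in_set_conv_nth DiffI singletonD)
    define M where "M = cond_sub C.Sig i j (A - {i})"
    have Mc: "M \<in> carrier_mat (Suc (length ys)) (Suc (length ys))"
      unfolding M_def cond_sub_def ys_def[symmetric] using sub_mat_carrier[of C.Sig "i # ys" "j # ys"] by simp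
    have ent: "M $$ (a,b) = C.Sig $$ ((i # ys) ! a, (j # ys) ! b)" if "a < Suc (length ys)" "b < Suc (length ys)" for a b
      unfolding M_def cond_sub_def ys_def[symmetric] using that by (simp add: sub_mat_idx)
    have "det M = M $$ (0,0) * M $$ (Suc q', Suc q') - M $$ (0, Suc q') * M $$ (Suc q', 0)"
    proof (rule det_two[OF Mc])
      fix a b assume ab: "a < Suc (length ys)" "b < Suc (length ys)" "\<not> (a \<in> {0, Suc q'} \<and> b \<in> {0, Suc q'})"
      show "M $$ (a,b) = (if a = b then 1 else 0)"
      proof (cases a)
        case 0
        then obtain b' where b: "b = Suc b'" "b' \<noteq> q'" using ab by (cases b) auto
        have l: "b' < length ys" using ab b by auto
        have "ys ! b' \<noteq> k'" using q' l b ys(1) nth_eq_iff_index_eq by metis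
        hence "\<forall>t\<le>L. ys ! b' \<noteq> u t" using offc ysn[OF l] by auto
        hence "C.Sig $$ (i, ys ! b') = 0" using C.Sig_off[OF ijn(1) ysn'[OF l]] ysn[OF l] by auto
        thus ?thesis using ent ab 0 b by simp
      next
        case (Suc a')
        have la: "a' < length ys" using ab Suc by auto
        show ?thesis
        proof (cases b)
          case 0
          have "a' \<noteq> q'" using ab Suc 0 by auto
          hence "ys ! a' \<noteq> k'" using q' la ys(1) nth_eq_iff_index_eq by metis
          hence "\<forall>t\<le>L. ys ! a' \<noteq> u t" using offc ysn[OF la] by auto
          hence "C.Sig $$ (ys ! a', j) = 0" using C.Sig_off[OF ysn'[OF la] ijn(2)] ysn[OF la] jA by auto
          thus ?thesis using ent ab 0 Suc by simp
        next
          case (Suc b')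
          have lb: "b' < length ys" using ab Suc by auto
          have "a' \<noteq> q' \<or> b' \<noteq> q'" using ab Suc \<open>a = Suc a'\<close> by auto
          hence "ys ! a' \<noteq> k' \<or> ys ! b' \<noteq> k'" using q' la lb ys(1) nth_eq_iff_index_eq by metis
          hence "(\<forall>t\<le>L. ys ! a' \<noteq> u t) \<or> (\<forall>t\<le>L. ys ! b' \<noteq> u t)"
            using offc ysn[OF la] ysn[OF lb] by auto
          hence "C.Sig $$ (ys ! a', ys ! b') = (if ys ! a' = ys ! b' then 1 else 0)"
            using C.Sig_off[OF ysn'[OF la] ysn'[OF lb]] by auto
          also have "\<dots> = (if a' = b' then 1 else 0)" using ys la lb nth_eq_iff_index_eq by metis
          finally show ?thesis using ent ab Suc \<open>a = Suc a'\<close> by simp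
        qed
      qed
    qed (use q' in auto)
    hence num: "det M = 2 * (real L + 2) - 6"
      using ent q' Sij Skk Sik Skj by simp
    have "lambda_cond C.Sig i j A = (2 * (real L + 2) - 6) / (2 * (real L + 2) - 4)"
      unfolding lambda_cond_def M_def[symmetric] num den by simp
    moreover have "2 * (real L + 2) - 4 > 0" unfolding L_def by simp
    ultimately show False using HC by (simp add: field_simps)
  qed
  show ?thesis
  proof
    show "i \<in> A" by (rule iA)
    show "A \<subseteq> {0..<n} - de_bar E j"
      using An jA noDesc unfolding de_bar_def de_def by auto
  qed
qed

end
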